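(* Let $f:\Gamma_+\to\mathbb{R}$ be a smooth function which is homogeneous of degree one. Then $f\in\mathcal{C}_n$ if and only if the following hold everywhere on $\Gamma_+$: (1) $\dot f^i=\frac{\partial f}{\partial x_i}>0$ for each $i$; (2) the matrix $\ddot f^{ij}=\frac{\partial^2 f}{\partial x_i\partial x_j}$ is non-positive (negative semidefinite); (3) the matrix $\ddot f^{ij}+2\frac{\dot f^i}{x_i}\delta_{ij}$ is non-negative (positive semidefinite).
   Context: $\Gamma_+=\{x\in\mathbb{R}^n: x_i>0\ \forall i\}$. $\mathcal{C}_n$ is the class of functions $f:\Gamma_+\to\mathbb{R}$ which are $C^\infty$, homogeneous of degree one ($f(cx)=cf(x)$ for $c>0$), strictly monotone increasing ($\partial f/\partial x_i>0$ for each $i$), concave, and inverse-concave, meaning that $f^*(x_1,\dots,x_n)=-f(x_1^{-1},\dots,x_n^{-1})$ is concave on $\Gamma_+$. *)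

theory Defs
  imports "HOL-Analysis.Analysis"
begin

definition Gamma_plus :: "(real^'n) set" where
  "Gamma_plus = {x. \<forall>i. 0 < x $ i}"

definition partial :: "'n \<Rightarrow> (real^'n \<Rightarrow> real) \<Rightarrow> real^'n \<Rightarrow> real" where
  "partial i g x = deriv (\<lambda>t. g (x + t *\<^sub>R axis i 1)) 0"

fun iter_partial :: "'n list \<Rightarrow> (real^'n \<Rightarrow> real) \<Rightarrow> real^'n \<Rightarrow> real" where
  "iter_partial [] g = g"
| "iter_partial (i # is) g = partial i (iter_partial is g)"

definition smooth_on :: "(real^'n) set \<Rightarrow> (real^'n \<Rightarrow> real) \<Rightarrow> bool" where
  "smooth_on S g \<longleftrightarrow>
     (\<forall>is. continuous_on S (iter_partial is g) \<and>
        (\<forall>i. \<forall>x\<in>S. (\<lambda>t. iter_partial is g (x + t *\<^sub>R axis i 1)) differentiable (at 0)))"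

definition homogeneous_one :: "(real^'n) set \<Rightarrow> (real^'n \<Rightarrow> real) \<Rightarrow> bool" where
  "homogeneous_one S g \<longleftrightarrow> (\<forall>x\<in>S. \<forall>c>0. g (c *\<^sub>R x) = c * g x)"

definition inverse_concave :: "(real^'n \<Rightarrow> real) \<Rightarrow> bool" where
  "inverse_concave g \<longleftrightarrow> concave_on Gamma_plus (\<lambda>x. - g (\<chi> i. inverse (x $ i)))"

definition class_C :: "(real^'n \<Rightarrow> real) set" where
  "class_C = {g. smooth_on Gamma_plus g \<and> homogeneous_one Gamma_plus g
      \<and> (\<forall>x\<in>Gamma_plus. \<forall>i. 0 < partial i g x)
      \<and> concave_on Gamma_plus g \<and> inverse_concave g}"

end

theory Submission
  imports Defs
begin

lemma partials_step:
  fixes g :: "real^'n \<Rightarrow> real"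
  assumes D: "\<And>i y. dist y x < r \<Longrightarrow> ((\<lambda>t. g (y + t *\<^sub>R axis i 1)) has_real_derivative D i y) (at 0)"
    and B: "\<And>i y. dist y x < r \<Longrightarrow> \<bar>D i y - D i x\<bar> \<le> \<epsilon>"
    and k: "norm k < r"
    and seg: "\<And>z. \<bar>z\<bar> \<le> \<bar>c\<bar> \<Longrightarrow> dist (x + k + z *\<^sub>R axis a 1) x < r"
  shows "\<bar>g (x + k + c *\<^sub>R axis a 1) - g (x + k) - D a x * c\<bar> \<le> \<epsilon> * \<bar>c\<bar>"
proof -
  define \<psi> where "\<psi> s = g (x + k + s *\<^sub>R axis a 1) - s * D a x" for s
  let ?S = "{-\<bar>c\<bar>..\<bar>c\<bar>}"
  have der: "(\<psi> has_field_derivative (D a (x + k + s *\<^sub>R axis a 1) - D a x)) (at s within ?S)"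
    if s: "s \<in> ?S" for s
  proof -
    have h0: "((\<lambda>t. g ((x + k + s *\<^sub>R axis a 1) + t *\<^sub>R axis a 1)) has_real_derivative D a (x + k + s *\<^sub>R axis a 1)) (at 0)"
      by (rule D, rule seg) (use s in auto)
    then have "((\<lambda>t. g (x + k + (t + s) *\<^sub>R axis a 1)) has_real_derivative D a (x + k + s *\<^sub>R axis a 1)) (at 0)"
    proof -
      have eq: "\<And>t. (x + k + s *\<^sub>R axis a 1) + t *\<^sub>R axis a 1 = x + k + (t + s) *\<^sub>R axis a 1"
        by (simp add: scaleR_add_left)
      show ?thesis using h0 unfolding eq .
    qed
    then have h1: "((\<lambda>t. g (x + k + t *\<^sub>R axis a 1)) has_real_derivative D a (x + k + s *\<^sub>R axis a 1)) (at s)"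
      using DERIV_shift[where f="\<lambda>t. g (x + k + t *\<^sub>R axis a 1)" and x=0 and z=s] by simp
    have "(\<psi> has_field_derivative (D a (x + k + s *\<^sub>R axis a 1) - D a x)) (at s)"
      unfolding \<psi>_def using DERIV_diff[OF h1 DERIV_cmult_right[OF DERIV_ident, where c="D a x" and x=s]] by simp
    then show ?thesis by (rule has_field_derivative_at_within)
  qed
  have bnd: "norm (D a (x + k + s *\<^sub>R axis a 1) - D a x) \<le> \<epsilon>" if "s \<in> ?S" for s
    using B[OF seg, of s a] that by auto
  have "norm (\<psi> c - \<psi> 0) \<le> \<epsilon> * norm (c - 0)"
    by (rule field_differentiable_bound[OF convex_real_interval(5) der bnd]) auto
  then show ?thesis by (simp add: \<psi>_def algebra_simps)
qed


lemma partials_induct: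
  fixes g :: "real^'n \<Rightarrow> real"
  assumes D: "\<And>i y. dist y x < r \<Longrightarrow> ((\<lambda>t. g (y + t *\<^sub>R axis i 1)) has_real_derivative D i y) (at 0)"
    and B: "\<And>i y. dist y x < r \<Longrightarrow> \<bar>D i y - D i x\<bar> \<le> \<epsilon>"
    and F: "finite F"
  shows "\<forall>k. (\<forall>i. i \<notin> F \<longrightarrow> k$i = 0) \<longrightarrow> norm k < r \<longrightarrow>
     \<bar>g (x + k) - g x - (\<Sum>i\<in>F. D i x * k$i)\<bar> \<le> \<epsilon> * (\<Sum>i\<in>F. \<bar>k$i\<bar>)"
  using F
proof (induction F rule: finite_induct)
  case empty
  have "k = 0" if "\<forall>i. k$i = 0" for k :: "real^'n" using that by (simp add: vec_eq_iff)
  then show ?case by (metis add.right_neutral diff_self abs_zero empty_iff order_refl mult_zero_right sum.empty)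
next
  case (insert a F)
  show ?case
  proof (intro allI impI)
    fix k :: "real^'n"
    assume k0: "\<forall>i. i \<notin> insert a F \<longrightarrow> k$i = 0" and kr: "norm k < r"
    define k' where "k' = k - (k$a) *\<^sub>R axis a 1"
    have k'c: "k'$i = (if i = a then 0 else k$i)" for i
      by (simp add: k'_def axis_def)
    have kk: "k = k' + (k$a) *\<^sub>R axis a 1" by (simp add: k'_def)
    have nk': "norm k' \<le> norm k"
      by (rule norm_le_componentwise_cart) (simp add: k'c)
    have seg: "dist (x + k' + z *\<^sub>R axis a 1) x < r" if "\<bar>z\<bar> \<le> \<bar>k$a\<bar>" for z
    proof -
      have "norm (k' + z *\<^sub>R axis a 1) \<le> norm k"
        by (rule norm_le_componentwise_cart) (use that in \<open>auto simp: k'c axis_def\<close>)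
      then show ?thesis using kr by (simp add: dist_norm)
    qed
    have s1: "\<bar>g (x + k' + (k$a) *\<^sub>R axis a 1) - g (x + k') - D a x * (k$a)\<bar> \<le> \<epsilon> * \<bar>k$a\<bar>"
      by (rule partials_step[OF D B _ seg]) (use nk' kr in auto)
    have s2: "\<bar>g (x + k') - g x - (\<Sum>i\<in>F. D i x * k'$i)\<bar> \<le> \<epsilon> * (\<Sum>i\<in>F. \<bar>k'$i\<bar>)"
    proof -
      have "\<forall>i. i \<notin> F \<longrightarrow> k'$i = 0" using k0 by (simp add: k'c)
      moreover have "norm k' < r" using nk' kr by simp
      ultimately show ?thesis using insert.IH by blast
    qed
    have e1: "(\<Sum>i\<in>F. D i x * k'$i) = (\<Sum>i\<in>F. D i x * k$i)"
      using insert.hyps by (intro sum.cong) (auto simp: k'c)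
    have e2: "(\<Sum>i\<in>F. \<bar>k'$i\<bar>) = (\<Sum>i\<in>F. \<bar>k$i\<bar>)"
      using insert.hyps by (intro sum.cong) (auto simp: k'c)
    have "x + k = x + k' + (k$a) *\<^sub>R axis a 1" using kk by (simp add: add.assoc)
    then have gk: "g (x + k) = g (x + k' + (k$a) *\<^sub>R axis a 1)" by (rule arg_cong)
    show "\<bar>g (x + k) - g x - (\<Sum>i\<in>insert a F. D i x * k$i)\<bar> \<le> \<epsilon> * (\<Sum>i\<in>insert a F. \<bar>k$i\<bar>)"
    proof -
      have sp: "g (x + k) - g x - (\<Sum>i\<in>insert a F. D i x * k$i)
        = (g (x + k' + (k$a) *\<^sub>R axis a 1) - g (x + k') - D a x * (k$a))
          + (g (x + k') - g x - (\<Sum>i\<in>F. D i x * k'$i))"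
        unfolding gk e1 using insert.hyps by simp
      have sp2: "\<epsilon> * (\<Sum>i\<in>insert a F. \<bar>k$i\<bar>) = \<epsilon> * \<bar>k$a\<bar> + \<epsilon> * (\<Sum>i\<in>F. \<bar>k'$i\<bar>)"
        unfolding e2 using insert.hyps by (simp add: distrib_left)
      show ?thesis unfolding sp sp2 by (rule order_trans[OF abs_triangle_ineq add_mono[OF s1 s2]])
    qed
  qed
qed

lemma frechet_from_partials:
  fixes g :: "real^'n \<Rightarrow> real"
  assumes S: "open S" "x \<in> S"
    and D: "\<And>i y. y \<in> S \<Longrightarrow> ((\<lambda>t. g (y + t *\<^sub>R axis i 1)) has_real_derivative D i y) (at 0)"
    and C: "\<And>i. continuous_on S (D i)"
  shows "(g has_derivative (\<lambda>v. \<Sum>i\<in>UNIV. D i x * v$i)) (at x)"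
  unfolding has_derivative_at_alt
proof (intro conjI allI impI)
  show "bounded_linear (\<lambda>v. \<Sum>i\<in>UNIV. D i x * v$i)"
    by (intro bounded_linear_sum bounded_linear_compose[OF bounded_linear_mult_right] bounded_linear_vec_nth)
  fix e :: real assume e: "0 < e"
  define \<epsilon> where "\<epsilon> = e / real CARD('n)"
  have cp: "0 < real CARD('n)" by simp
  have ep: "0 < \<epsilon>" using e cp by (simp add: \<epsilon>_def)
  have "\<forall>\<^sub>F y in at x. \<forall>i. dist (D i y) (D i x) < \<epsilon>"
  proof (rule eventually_all_finite)
    fix i
    have "isCont (D i) x" using C S continuous_on_eq_continuous_at by blast
    then show "\<forall>\<^sub>F y in at x. dist (D i y) (D i x) < \<epsilon>"
      unfolding isCont_def using ep by (rule tendstoD)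
  qed
  moreover have "\<forall>\<^sub>F y in at x. y \<in> S"
    using S eventually_at_topological by blast
  ultimately have "\<forall>\<^sub>F y in at x. (\<forall>i. dist (D i y) (D i x) < \<epsilon>) \<and> y \<in> S"
    by (rule eventually_conj)
  then obtain d where d: "d > 0" and
    dP: "\<And>y. y \<noteq> x \<Longrightarrow> dist y x < d \<Longrightarrow> (\<forall>i. dist (D i y) (D i x) < \<epsilon>) \<and> y \<in> S"
    unfolding eventually_at by auto
  have dS: "y \<in> S" if "dist y x < d" for y using dP[OF _ that] S by (cases "y = x") auto
  have dB: "\<bar>D i y - D i x\<bar> \<le> \<epsilon>" if "dist y x < d" for i y
    using dP[OF _ that] ep by (cases "y = x") (auto simp: dist_real_def less_imp_le)
  have main: "\<forall>k. (\<forall>i. i \<notin> UNIV \<longrightarrow> k$i = 0) \<longrightarrow> norm k < d \<longrightarrow>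
     \<bar>g (x + k) - g x - (\<Sum>i\<in>UNIV. D i x * k$i)\<bar> \<le> \<epsilon> * (\<Sum>i\<in>UNIV. \<bar>k$i\<bar>)"
    by (rule partials_induct[OF D dB]) (auto intro: dS)
  show "\<exists>d>0. \<forall>y. norm (y - x) < d \<longrightarrow>
      norm (g y - g x - (\<Sum>i\<in>UNIV. D i x * (y - x)$i)) \<le> e * norm (y - x)"
  proof (intro exI[of _ d] conjI allI impI d)
    fix y :: "real^'n" assume y: "norm (y - x) < d"
    have "\<bar>g (x + (y - x)) - g x - (\<Sum>i\<in>UNIV. D i x * (y - x)$i)\<bar> \<le> \<epsilon> * (\<Sum>i\<in>UNIV. \<bar>(y - x)$i\<bar>)"
      using main y by blast
    also have "(\<Sum>i\<in>UNIV. \<bar>(y - x)$i\<bar>) \<le> (\<Sum>i\<in>(UNIV::'n set). norm (y - x))"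
      by (intro sum_mono component_le_norm_cart)
    then have "\<epsilon> * (\<Sum>i\<in>UNIV. \<bar>(y - x)$i\<bar>) \<le> \<epsilon> * (real CARD('n) * norm (y - x))"
      using ep by (intro mult_left_mono) auto
    also have "\<dots> = e * norm (y - x)" using cp by (simp add: \<epsilon>_def)
    finally show "norm (g y - g x - (\<Sum>i\<in>UNIV. D i x * (y - x)$i)) \<le> e * norm (y - x)"
      by simp
  qed
qed

lemma concave_1d_nsd:
  fixes \<phi> \<phi>' :: "real \<Rightarrow> real"
  assumes I: "open I" "convex I" "t \<in> I"
    and conc: "concave_on I \<phi>"
    and d1: "\<And>s. s \<in> I \<Longrightarrow> (\<phi> has_real_derivative \<phi>' s) (at s)"
    and d2: "(\<phi>' has_real_derivative q) (at t)"
  shows "q \<le> 0"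
proof (rule ccontr)
  assume "\<not> q \<le> 0"
  then have q: "q > 0" by simp
  obtain d where d: "d > 0" "\<And>h. h > 0 \<Longrightarrow> h < d \<Longrightarrow> \<phi>' t < \<phi>' (t + h)"
    using DERIV_pos_inc_right[OF d2 q] by blast
  obtain e where e: "e > 0" "ball t e \<subseteq> I" using I openE by blast
  define h where "h = min (d/2) (e/2)"
  have h: "h > 0" "h < d" "t + h \<in> I" using d e by (auto simp: h_def dist_real_def)
  have cv: "convex_on I (\<lambda>s. - \<phi> s)" using conc by (simp add: concave_on_def)
  have cn: "connected I" using I convex_connected by blast
  have int: "interior I = I" using I interior_open by blast
  have der: "((\<lambda>s. - \<phi> s) has_field_derivative - \<phi>' s) (at s within I)" if "s \<in> I" for s
    using DERIV_minus[OF d1[OF that]] by (rule has_field_derivative_at_within)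
  have t1: "(- \<phi> (t + h)) - (- \<phi> t) \<ge> (- \<phi>' t) * ((t + h) - t)"
    by (rule convex_on_imp_above_tangent[OF cv cn _ _ der]) (use I h int in auto)
  have t2: "(- \<phi> t) - (- \<phi> (t + h)) \<ge> (- \<phi>' (t + h)) * (t - (t + h))"
    by (rule convex_on_imp_above_tangent[OF cv cn _ _ der]) (use I h int in auto)
  from t1 t2 have "(\<phi>' (t + h) - \<phi>' t) * h \<le> 0" by (simp add: algebra_simps)
  moreover have "(\<phi>' (t + h) - \<phi>' t) * h > 0" using d(2)[OF h(1) h(2)] h by simp
  ultimately show False by simp
qed

lemma concave_iff_2nd:
  fixes F :: "real^'n \<Rightarrow> real"
  assumes S: "open S" "convex S"
    and d1: "\<And>x v t. x \<in> S \<Longrightarrow> x + t *\<^sub>R v \<in> S \<Longrightarrow>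
        ((\<lambda>s. F (x + s *\<^sub>R v)) has_real_derivative F1 (x + t *\<^sub>R v) v) (at t)"
    and d2: "\<And>x v t. x \<in> S \<Longrightarrow> x + t *\<^sub>R v \<in> S \<Longrightarrow>
        ((\<lambda>s. F1 (x + s *\<^sub>R v) v) has_real_derivative Q (x + t *\<^sub>R v) v) (at t)"
  shows "concave_on S F \<longleftrightarrow> (\<forall>x\<in>S. \<forall>v. Q x v \<le> 0)"
proof
  assume conc: "concave_on S F"
  show "\<forall>x\<in>S. \<forall>v. Q x v \<le> 0"
  proof (intro ballI allI)
    fix x v assume x: "x \<in> S"
    define I where "I = {t::real. x + t *\<^sub>R v \<in> S}"
    have oI: "open I"
    proof -
      have "continuous_on UNIV (\<lambda>t::real. x + t *\<^sub>R v)" by (intro continuous_intros)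
      then have "open ((\<lambda>t::real. x + t *\<^sub>R v) -` S)" using S(1) open_vimage by blast
      then show ?thesis by (simp add: I_def vimage_def)
    qed
    have aff: "x + (u * a + w * b) *\<^sub>R v = u *\<^sub>R (x + a *\<^sub>R v) + w *\<^sub>R (x + b *\<^sub>R v)"
      if "u + w = 1" for u w a b
    proof -
      have "x = u *\<^sub>R x + w *\<^sub>R x" using that by (metis scaleR_add_left scaleR_one)
      then show ?thesis by (simp add: algebra_simps)
    qed
    have cI: "convex I"
      unfolding convex_def I_def
    proof (intro ballI allI impI, clarsimp)
      fix a b u w :: real
      assume "x + a *\<^sub>R v \<in> S" "x + b *\<^sub>R v \<in> S" "0 \<le> u" "0 \<le> w" "u + w = 1"
      then show "x + (u * a + w * b) *\<^sub>R v \<in> S"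
        using S(2) aff[of u w a b] unfolding convex_def by simp
    qed
    have concI: "concave_on I (\<lambda>s. F (x + s *\<^sub>R v))"
      unfolding concave_on_iff
    proof (intro conjI cI ballI allI impI)
      fix a b u w :: real
      assume ab: "a \<in> I" "b \<in> I" and uw: "0 \<le> u" "0 \<le> w" "u + w = 1"
      have "u * F (x + a *\<^sub>R v) + w * F (x + b *\<^sub>R v) \<le> F (u *\<^sub>R (x + a *\<^sub>R v) + w *\<^sub>R (x + b *\<^sub>R v))"
        using conc ab uw unfolding concave_on_iff I_def by blast
      then show "u * F (x + a *\<^sub>R v) + w * F (x + b *\<^sub>R v) \<le> F (x + (u *\<^sub>R a + w *\<^sub>R b) *\<^sub>R v)"
        using aff[OF uw(3)] by simp
    qed
    have 0: "0 \<in> I" using x by (simp add: I_def)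
    have "Q (x + 0 *\<^sub>R v) v \<le> 0"
      by (rule concave_1d_nsd[OF oI cI 0 concI, of "\<lambda>t. F1 (x + t *\<^sub>R v) v"])
         (use d1 d2[of x 0 v] x in \<open>auto simp: I_def\<close>)
    then show "Q x v \<le> 0" by simp
  qed
next
  assume Q: "\<forall>x\<in>S. \<forall>v. Q x v \<le> 0"
  show "concave_on S F"
    unfolding concave_on_iff
  proof (intro conjI S ballI allI impI)
    fix x y u w assume xy: "x \<in> S" "y \<in> S" and uw: "0 \<le> u" "0 \<le> w" "u + w = (1::real)"
    have inS: "x + t *\<^sub>R (y - x) \<in> S" if "t \<in> {0..1}" for t
    proof -
      have "x + t *\<^sub>R (y - x) = (1 - t) *\<^sub>R x + t *\<^sub>R y" by (simp add: algebra_simps)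
      then show ?thesis using S(2) xy that unfolding convex_def by auto
    qed
    have "concave_on {0..1} (\<lambda>t. F (x + t *\<^sub>R (y - x)))"
      by (rule f''_le0_imp_concave[where f'="\<lambda>t. F1 (x + t *\<^sub>R (y - x)) (y - x)"
            and f''="\<lambda>t. Q (x + t *\<^sub>R (y - x)) (y - x)"])
         (use d1 d2 xy inS Q in auto)
    then have "(1 - w) * F (x + 0 *\<^sub>R (y - x)) + w * F (x + 1 *\<^sub>R (y - x))
        \<le> F (x + ((1 - w) *\<^sub>R 0 + w *\<^sub>R 1) *\<^sub>R (y - x))"
      using uw concave_onD[of "{0..1}" "\<lambda>t. F (x + t *\<^sub>R (y - x))" w 0 1] by auto
    moreover have "x + w *\<^sub>R (y - x) = u *\<^sub>R x + w *\<^sub>R y"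
    proof -
      have "x = u *\<^sub>R x + w *\<^sub>R x" using uw(3) by (metis scaleR_add_left scaleR_one)
      then show ?thesis by (simp add: algebra_simps)
    qed
    moreover have "u = 1 - w" using uw by simp
    ultimately show "u * F x + w * F y \<le> F (u *\<^sub>R x + w *\<^sub>R y)"
      by simp
  qed
qed

lemma vec_vector_derivative:
  fixes c :: "real \<Rightarrow> real^'n"
  assumes "\<And>i. ((\<lambda>s. c s $ i) has_real_derivative c' $ i) (at t)"
  shows "(c has_vector_derivative c') (at t)"
  unfolding has_vector_derivative_def
proof (rule iffD2[OF has_derivative_componentwise_within], rule ballI)
  fix b :: "real^'n" assume "b \<in> Basis"
  then obtain i u where b0: "b = axis i u" "u \<in> (Basis :: real set)" unfolding Basis_vec_def by blast
  then have b: "b = axis i 1" by simp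
  have "((\<lambda>s. c s $ i) has_derivative (\<lambda>h. h * c' $ i)) (at t)"
  proof -
    have "(\<lambda>h. h * c' $ i) = (*) (c' $ i)" by (auto simp: fun_eq_iff)
    then show ?thesis using assms[of i] unfolding has_field_derivative_def by simp
  qed
  then show "((\<lambda>x. c x \<bullet> b) has_derivative (\<lambda>x. x *\<^sub>R c' \<bullet> b)) (at t)"
    by (simp add: b inner_axis)
qed

lemma open_Gamma: "open (Gamma_plus :: (real^'n) set)"
proof -
  have "Gamma_plus = (\<Inter>i. (\<lambda>x::real^'n. x $ i) -` {0<..})"
    by (auto simp: Gamma_plus_def)
  moreover have "open (\<Inter>i. (\<lambda>x::real^'n. x $ i) -` {0<..})"
    using open_vimage_vec_nth[OF open_greaterThan] by (intro open_INT) auto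
  ultimately show ?thesis by simp
qed

lemma convex_Gamma: "convex (Gamma_plus :: (real^'n) set)"
  unfolding convex_def Gamma_plus_def
proof (clarsimp)
  fix x y :: "real^'n" and u v :: real and i
  assume x: "\<forall>i. 0 < x $ i" and y: "\<forall>i. 0 < y $ i" and uv: "0 \<le> u" "0 \<le> v" "u + v = 1"
  have "0 < x $ i" "0 < y $ i" using x y by auto
  show "0 < u * x $ i + v * y $ i"
  proof (cases "u = 0")
    case True
    then have "v = 1" using uv by simp
    then show ?thesis using True \<open>0 < y $ i\<close> by simp
  next
    case False
    then have "0 < u" using uv by simp
    then have "0 < u * x $ i" using \<open>0 < x $ i\<close> by (rule mult_pos_pos)
    moreover have "0 \<le> v * y $ i" using uv(2) \<open>0 < y $ i\<close> by simp
    ultimately show ?thesis by linarith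
  qed
qed

lemma smooth_deriv:
  assumes "smooth_on S g" "y \<in> S"
  shows "((\<lambda>t. iter_partial is g (y + t *\<^sub>R axis i 1)) has_real_derivative partial i (iter_partial is g) y) (at 0)"
  using assms unfolding smooth_on_def partial_def
  by (simp add: DERIV_deriv_iff_real_differentiable)

lemma smooth_frechet:
  assumes "smooth_on S g" "open S" "x \<in> S"
  shows "(iter_partial is g has_derivative (\<lambda>v. \<Sum>i\<in>UNIV. partial i (iter_partial is g) x * v$i)) (at x)"
proof (rule frechet_from_partials[OF assms(2,3)])
  show "\<And>i y. y \<in> S \<Longrightarrow> ((\<lambda>t. iter_partial is g (y + t *\<^sub>R axis i 1)) has_real_derivative partial i (iter_partial is g) y) (at 0)"
    using smooth_deriv[OF assms(1)] by blast
  fix i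
  have "continuous_on S (iter_partial (i # is) g)" using assms(1) unfolding smooth_on_def by blast
  then show "continuous_on S (partial i (iter_partial is g))" by simp
qed

lemma chain_partial:
  fixes c :: "real \<Rightarrow> real^'n"
  assumes "smooth_on S g" "open S" "c t \<in> S" "(c has_vector_derivative c') (at t)"
  shows "((\<lambda>s. iter_partial is g (c s)) has_real_derivative (\<Sum>i\<in>UNIV. partial i (iter_partial is g) (c t) * c'$i)) (at t)"
proof -
  have "((iter_partial is g \<circ> c) has_derivative ((\<lambda>v. \<Sum>i\<in>UNIV. partial i (iter_partial is g) (c t) * v$i) \<circ> (\<lambda>s. s *\<^sub>R c'))) (at t)"
    by (rule diff_chain_at[OF assms(4)[unfolded has_vector_derivative_def] smooth_frechet[OF assms(1-3)]])
  moreover have "((\<lambda>v. \<Sum>i\<in>UNIV. partial i (iter_partial is g) (c t) * v$i) \<circ> (\<lambda>s. s *\<^sub>R c'))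
      = (*) (\<Sum>i\<in>UNIV. partial i (iter_partial is g) (c t) * c'$i)"
    by (auto simp: fun_eq_iff sum_distrib_left algebra_simps)
  ultimately show ?thesis unfolding has_field_derivative_def by (simp add: o_def)
qed

lemma second_along:
  fixes c c1 :: "real \<Rightarrow> real^'n"
  assumes "smooth_on S g" "open S" "c t \<in> S" "(c has_vector_derivative c1 t) (at t)"
    and "\<And>j. ((\<lambda>s. c1 s $ j) has_real_derivative c2 $ j) (at t)"
  shows "((\<lambda>s. \<Sum>j\<in>UNIV. partial j g (c s) * c1 s $ j) has_real_derivative
     (\<Sum>j\<in>UNIV. (\<Sum>i\<in>UNIV. partial i (partial j g) (c t) * c1 t $ i) * c1 t $ j + partial j g (c t) * c2 $ j)) (at t)"
proof (rule DERIV_sum)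
  fix j
  have "((\<lambda>s. iter_partial [j] g (c s)) has_real_derivative (\<Sum>i\<in>UNIV. partial i (iter_partial [j] g) (c t) * c1 t $ i)) (at t)"
    by (rule chain_partial[OF assms(1-4)])
  then have "((\<lambda>s. partial j g (c s)) has_real_derivative (\<Sum>i\<in>UNIV. partial i (partial j g) (c t) * c1 t $ i)) (at t)"
    by simp
  from DERIV_mult[OF this assms(5)[of j]]
  show "((\<lambda>s. partial j g (c s) * c1 s $ j) has_real_derivative
     (\<Sum>i\<in>UNIV. partial i (partial j g) (c t) * c1 t $ i) * c1 t $ j + partial j g (c t) * c2 $ j) (at t)"
    by (simp add: mult.commute)
qed

lemma concave_iff_hess:
  fixes g :: "real^'n \<Rightarrow> real"
  assumes sm: "smooth_on Gamma_plus g"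
  shows "concave_on Gamma_plus g \<longleftrightarrow>
    (\<forall>x\<in>Gamma_plus. \<forall>v::real^'n. (\<Sum>i\<in>UNIV. \<Sum>j\<in>UNIV. partial i (partial j g) x * v $ i * v $ j) \<le> 0)"
proof -
  define F1 where "F1 p v = (\<Sum>j\<in>UNIV. partial j g p * v$j)" for p v :: "real^'n"
  define Q where "Q p v = (\<Sum>i\<in>UNIV. \<Sum>j\<in>UNIV. partial i (partial j g) p * v$i * v$j)" for p v :: "real^'n"
  have cvd: "((\<lambda>s. x + s *\<^sub>R v) has_vector_derivative v) (at t)" for x v :: "real^'n" and t
    by (auto intro!: derivative_eq_intros)
  have "concave_on Gamma_plus g \<longleftrightarrow> (\<forall>x\<in>Gamma_plus. \<forall>v. Q x v \<le> 0)"
  proof (rule concave_iff_2nd[OF open_Gamma convex_Gamma])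
    fix x v :: "real^'n" and t :: real assume xt: "x + t *\<^sub>R v \<in> Gamma_plus"
    have "((\<lambda>s. iter_partial [] g (x + s *\<^sub>R v)) has_real_derivative
        (\<Sum>i\<in>UNIV. partial i (iter_partial [] g) (x + t *\<^sub>R v) * v$i)) (at t)"
      by (rule chain_partial[OF sm open_Gamma _ cvd]) (use xt in simp)
    then show "((\<lambda>s. g (x + s *\<^sub>R v)) has_real_derivative F1 (x + t *\<^sub>R v) v) (at t)"
      by (simp add: F1_def)
    have "((\<lambda>s. \<Sum>j\<in>UNIV. partial j g (x + s *\<^sub>R v) * (\<lambda>s. v) s $ j) has_real_derivative
     (\<Sum>j\<in>UNIV. (\<Sum>i\<in>UNIV. partial i (partial j g) (x + t *\<^sub>R v) * (\<lambda>s. v) t $ i) * (\<lambda>s. v) t $ j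
        + partial j g (x + t *\<^sub>R v) * (0::real^'n) $ j)) (at t)"
      by (rule second_along[OF sm open_Gamma _ cvd]) (use xt in auto)
    moreover have "(\<Sum>j\<in>UNIV. (\<Sum>i\<in>UNIV. partial i (partial j g) (x + t *\<^sub>R v) * v $ i) * v $ j
        + partial j g (x + t *\<^sub>R v) * (0::real^'n) $ j) = Q (x + t *\<^sub>R v) v"
    proof -
      have "(\<Sum>j\<in>UNIV. (\<Sum>i\<in>UNIV. partial i (partial j g) (x + t *\<^sub>R v) * v $ i) * v $ j
        + partial j g (x + t *\<^sub>R v) * (0::real^'n) $ j)
        = (\<Sum>j\<in>UNIV. \<Sum>i\<in>UNIV. partial i (partial j g) (x + t *\<^sub>R v) * v $ i * v $ j)"
        by (simp add: sum_distrib_right)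
      also have "\<dots> = Q (x + t *\<^sub>R v) v"
        unfolding Q_def by (rule sum.swap)
      finally show ?thesis .
    qed
    ultimately show "((\<lambda>s. F1 (x + s *\<^sub>R v) v) has_real_derivative Q (x + t *\<^sub>R v) v) (at t)"
      by (simp add: F1_def)
  qed
  then show ?thesis by (simp add: Q_def)
qed

lemma R_split:
  fixes g :: "real^'n \<Rightarrow> real"
  shows "(\<Sum>i\<in>UNIV. \<Sum>j\<in>UNIV.
           (partial i (partial j g) x + (if i = j then 2 * partial i g x / x $ i else 0)) * u $ i * u $ j)
     = (\<Sum>i\<in>UNIV. \<Sum>j\<in>UNIV. partial i (partial j g) x * u $ i * u $ j)
       + (\<Sum>i\<in>UNIV. 2 * partial i g x / x $ i * (u $ i)^2)" (is "_ = ?rhs")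
proof -
  have "(\<Sum>i\<in>UNIV. \<Sum>j\<in>UNIV.
           (partial i (partial j g) x + (if i = j then 2 * partial i g x / x $ i else 0)) * u $ i * u $ j)
     = (\<Sum>i\<in>UNIV. (\<Sum>j\<in>UNIV. partial i (partial j g) x * u $ i * u $ j)
          + (\<Sum>j\<in>UNIV. (if i = j then 2 * partial i g x / x $ i else 0) * u $ i * u $ j))"
    by (simp add: distrib_right sum.distrib)
  also have "\<dots> = (\<Sum>i\<in>UNIV. (\<Sum>j\<in>UNIV. partial i (partial j g) x * u $ i * u $ j)
          + 2 * partial i g x / x $ i * (u $ i)^2)"
  proof (rule sum.cong[OF refl])
    fix i
    have "(\<Sum>j\<in>UNIV. (if i = j then 2 * partial i g x / x $ i else 0) * u $ i * u $ j)
        = (\<Sum>j\<in>UNIV. (if i = j then 2 * partial i g x / x $ i * u $ i * u $ j else 0))"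
      by (rule sum.cong) auto
    also have "\<dots> = 2 * partial i g x / x $ i * (u $ i)^2"
      by (simp add: power2_eq_square)
    finally show "(\<Sum>j\<in>UNIV. partial i (partial j g) x * u $ i * u $ j)
          + (\<Sum>j\<in>UNIV. (if i = j then 2 * partial i g x / x $ i else 0) * u $ i * u $ j)
        = (\<Sum>j\<in>UNIV. partial i (partial j g) x * u $ i * u $ j)
          + 2 * partial i g x / x $ i * (u $ i)^2" by simp
  qed
  also have "\<dots> = ?rhs" by (simp add: sum.distrib)
  finally show ?thesis .
qed

definition inv_vec :: "real^'n \<Rightarrow> real^'n" where
  "inv_vec p = (\<chi> i. inverse (p $ i))"

lemma inv_vec_G: "p \<in> Gamma_plus \<Longrightarrow> inv_vec p \<in> Gamma_plus"
  by (simp add: inv_vec_def Gamma_plus_def)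

lemma inv_vec_inv: "inv_vec (inv_vec p) = p"
  by (simp add: inv_vec_def vec_eq_iff)

lemma inv_concave_iff:
  fixes g :: "real^'n \<Rightarrow> real"
  assumes sm: "smooth_on Gamma_plus g"
  shows "inverse_concave g \<longleftrightarrow>
    (\<forall>x\<in>Gamma_plus. \<forall>v::real^'n. 0 \<le> (\<Sum>i\<in>UNIV. \<Sum>j\<in>UNIV.
           (partial i (partial j g) x + (if i = j then 2 * partial i g x / x $ i else 0))
             * v $ i * v $ j))"
proof -
  define F where "F p = - g (inv_vec p)" for p
  define F1 where "F1 p v = - (\<Sum>j\<in>UNIV. partial j g (inv_vec p) * (- ((inverse (p$j))^2 * v$j)))"
    for p v :: "real^'n"
  define Q where "Q p v = - (\<Sum>j\<in>UNIV.
     (\<Sum>i\<in>UNIV. partial i (partial j g) (inv_vec p) * (- ((inverse (p$i))^2 * v$i))) * (- ((inverse (p$j))^2 * v$j))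
      + partial j g (inv_vec p) * (2 * inverse (p$j) ^ 3 * (v$j)^2))" for p v :: "real^'n"
  have ic: "inverse_concave g \<longleftrightarrow> concave_on Gamma_plus F"
  proof -
    have "F = (\<lambda>x. - g (\<chi> i. inverse (x $ i)))" by (simp add: fun_eq_iff F_def inv_vec_def)
    then show ?thesis by (simp add: inverse_concave_def)
  qed
  have step: "concave_on Gamma_plus F \<longleftrightarrow> (\<forall>x\<in>Gamma_plus. \<forall>v. Q x v \<le> 0)"
  proof (rule concave_iff_2nd[OF open_Gamma convex_Gamma])
    fix x v :: "real^'n" and t :: real assume xt: "x + t *\<^sub>R v \<in> Gamma_plus"
    define c where "c s = inv_vec (x + s *\<^sub>R v)" for s
    define c1 where "c1 s = (\<chi> j. - ((inverse ((x + s *\<^sub>R v)$j))^2 * v$j))" for s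
    define c2 where "c2 = (\<chi> j. 2 * inverse ((x + t *\<^sub>R v)$j) ^ 3 * (v$j)^2)"
    have pos: "0 < x$j + t * v$j" for j using xt by (simp add: Gamma_plus_def)
    have ct: "c t \<in> Gamma_plus" using inv_vec_G[OF xt] by (simp add: c_def)
    have cd: "(c has_vector_derivative c1 t) (at t)"
    proof (rule vec_vector_derivative)
      fix i
      have "((\<lambda>s. inverse (x$i + s * v$i)) has_real_derivative - ((inverse (x$i + t * v$i))^2 * v$i)) (at t)"
        using pos[of i] by (auto intro!: derivative_eq_intros simp: power2_eq_square field_simps)
      then show "((\<lambda>s. c s $ i) has_real_derivative c1 t $ i) (at t)"
        by (simp add: c_def c1_def inv_vec_def)
    qed
    have c1d: "((\<lambda>s. c1 s $ j) has_real_derivative c2 $ j) (at t)" for j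
    proof -
      have "((\<lambda>s. - ((inverse (x$j + s * v$j))^2 * v$j)) has_real_derivative
          2 * inverse (x$j + t * v$j) ^ 3 * (v$j)^2) (at t)"
      proof -
        have h: "((\<lambda>s. inverse (x$j + s * v$j)) has_real_derivative - ((inverse (x$j + t * v$j))^2 * v$j)) (at t)"
          using pos[of j] by (auto intro!: derivative_eq_intros simp: power2_eq_square field_simps)
        have h2: "((\<lambda>s. - ((inverse (x$j + s * v$j))^2 * v$j)) has_real_derivative
           - (of_nat 2 * (- ((inverse (x$j + t * v$j))^2 * v$j) * (inverse (x$j + t * v$j)) ^ (2 - Suc 0)) * v$j)) (at t)"
          by (rule DERIV_minus[OF DERIV_cmult_right[OF DERIV_power[OF h]]])
        have eq: "- (of_nat 2 * (- (a^2 * w) * a ^ (2 - Suc 0)) * w) = 2 * a ^ 3 * w^2" for a w :: real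
          by (simp add: power2_eq_square power3_eq_cube)
        show ?thesis using h2 unfolding eq .
      qed
      then show ?thesis by (simp add: c1_def c2_def)
    qed
    have "((\<lambda>s. iter_partial [] g (c s)) has_real_derivative
        (\<Sum>i\<in>UNIV. partial i (iter_partial [] g) (c t) * c1 t $ i)) (at t)"
      by (rule chain_partial[OF sm open_Gamma ct cd])
    from DERIV_minus[OF this]
    show "((\<lambda>s. F (x + s *\<^sub>R v)) has_real_derivative F1 (x + t *\<^sub>R v) v) (at t)"
      by (simp add: F_def F1_def c_def c1_def)
    have "((\<lambda>s. \<Sum>j\<in>UNIV. partial j g (c s) * c1 s $ j) has_real_derivative
     (\<Sum>j\<in>UNIV. (\<Sum>i\<in>UNIV. partial i (partial j g) (c t) * c1 t $ i) * c1 t $ j + partial j g (c t) * c2 $ j)) (at t)"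
      by (rule second_along[OF sm open_Gamma ct cd c1d])
    from DERIV_minus[OF this]
    show "((\<lambda>s. F1 (x + s *\<^sub>R v) v) has_real_derivative Q (x + t *\<^sub>R v) v) (at t)"
      by (simp add: F1_def Q_def c_def c1_def c2_def)
  qed
  have key: "Q p v = - ((\<Sum>i\<in>UNIV. \<Sum>j\<in>UNIV. partial i (partial j g) (inv_vec p) * u $ i * u $ j)
       + (\<Sum>i\<in>UNIV. 2 * partial i g (inv_vec p) / inv_vec p $ i * (u $ i)^2))"
    if p: "p \<in> Gamma_plus" and u: "u = (\<chi> i. (inverse (p$i))^2 * v$i)" for p v u :: "real^'n"
  proof -
    have pp: "0 < p$i" for i using p by (simp add: Gamma_plus_def)
    have e1: "(\<Sum>j\<in>UNIV. (\<Sum>i\<in>UNIV. partial i (partial j g) (inv_vec p) * (- ((inverse (p$i))^2 * v$i))) * (- ((inverse (p$j))^2 * v$j)))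
       = (\<Sum>i\<in>UNIV. \<Sum>j\<in>UNIV. partial i (partial j g) (inv_vec p) * u $ i * u $ j)"
    proof -
      have "(\<Sum>j\<in>UNIV. (\<Sum>i\<in>UNIV. partial i (partial j g) (inv_vec p) * (- ((inverse (p$i))^2 * v$i))) * (- ((inverse (p$j))^2 * v$j)))
        = (\<Sum>j\<in>UNIV. \<Sum>i\<in>UNIV. partial i (partial j g) (inv_vec p) * u $ i * u $ j)"
        by (simp add: u sum_distrib_right sum_distrib_left sum_negf mult.assoc mult.left_commute)
      also have "\<dots> = (\<Sum>i\<in>UNIV. \<Sum>j\<in>UNIV. partial i (partial j g) (inv_vec p) * u $ i * u $ j)"
        by (rule sum.swap)
      finally show ?thesis .
    qed
    have e2: "partial j g (inv_vec p) * (2 * inverse (p$j) ^ 3 * (v$j)^2)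
        = 2 * partial j g (inv_vec p) / inv_vec p $ j * (u $ j)^2" for j
      using pp[of j] by (simp add: u inv_vec_def field_simps power2_eq_square power3_eq_cube)
    show ?thesis unfolding Q_def sum.distrib e1 e2 by simp
  qed
  have "(\<forall>x\<in>Gamma_plus. \<forall>v. Q x v \<le> 0) \<longleftrightarrow>
    (\<forall>x\<in>Gamma_plus. \<forall>v::real^'n. 0 \<le> (\<Sum>i\<in>UNIV. \<Sum>j\<in>UNIV.
           (partial i (partial j g) x + (if i = j then 2 * partial i g x / x $ i else 0))
             * v $ i * v $ j))"
    (is "?L \<longleftrightarrow> ?R")
  proof
    assume L: ?L
    show ?R
    proof (intro ballI allI)
      fix x u :: "real^'n" assume x: "x \<in> Gamma_plus"
      define p where "p = inv_vec x"
      define v where "v = (\<chi> i. u$i / (x$i)^2)"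
      have p: "p \<in> Gamma_plus" using inv_vec_G[OF x] by (simp add: p_def)
      have xp: "inv_vec p = x" by (simp add: p_def inv_vec_inv)
      have xx: "0 < x$i" for i using x by (simp add: Gamma_plus_def)
      have uu: "u = (\<chi> i. (inverse (p$i))^2 * v$i)"
        using xx by (simp add: vec_eq_iff p_def v_def inv_vec_def field_simps less_imp_neq[OF xx, symmetric])
      have "Q p v \<le> 0" using L p by blast
      then show "0 \<le> (\<Sum>i\<in>UNIV. \<Sum>j\<in>UNIV.
           (partial i (partial j g) x + (if i = j then 2 * partial i g x / x $ i else 0)) * u $ i * u $ j)"
        unfolding R_split key[OF p uu] xp by simp
    qed
  next
    assume R: ?R
    show ?L
    proof (intro ballI allI)
      fix p v :: "real^'n" assume p: "p \<in> Gamma_plus"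
      define u where "u = (\<chi> i. (inverse (p$i))^2 * v$i)"
      have "0 \<le> (\<Sum>i\<in>UNIV. \<Sum>j\<in>UNIV.
           (partial i (partial j g) (inv_vec p) + (if i = j then 2 * partial i g (inv_vec p) / inv_vec p $ i else 0)) * u $ i * u $ j)"
        using R inv_vec_G[OF p] by blast
      then show "Q p v \<le> 0" unfolding R_split key[OF p u_def] by simp
    qed
  qed
  with ic step show ?thesis by simp
qed

theorem theorem2p1:
  fixes f :: "real^'n \<Rightarrow> real"
  assumes "smooth_on Gamma_plus f"
    and "homogeneous_one Gamma_plus f"
  shows "f \<in> class_C \<longleftrightarrow>
    (\<forall>x\<in>Gamma_plus.
       (\<forall>i. 0 < partial i f x) \<and>
       (\<forall>v::real^'n. (\<Sum>i\<in>UNIV. \<Sum>j\<in>UNIV. partial i (partial j f) x * v $ i * v $ j) \<le> 0) \<and>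
       (\<forall>v::real^'n. 0 \<le> (\<Sum>i\<in>UNIV. \<Sum>j\<in>UNIV.
           (partial i (partial j f) x + (if i = j then 2 * partial i f x / x $ i else 0))
             * v $ i * v $ j)))"
  unfolding class_C_def mem_Collect_eq
    concave_iff_hess[OF assms(1)] inv_concave_iff[OF assms(1)]
  using assms by blast

end
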